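(* Let $G$ be an infinite compact metrizable abelian group with normalized Haar measure $m$, and let $\rho$ be an admissible (semi)metric on $(G,m)$ invariant under all translations. Then there exists a sequence $(g_n)$ of elements of $G$ that converges to $0$ both in the group topology of $G$ and with respect to $\rho$ (i.e. $\rho(0,g_n)\to 0$).
   Context: A measurable $\rho:G\times G\to\mathbb R_+$ is an admissible (semi)metric if (1) it is a semimetric (resp. metric) in the usual sense on a set of full measure and $\int\int\rho\,dm\,dm<\infty$, and (2) the completion of $(G,\rho)$, or of the quotient of $G$ by the partition into classes $\{y:\rho(x,y)=0\}$ in the semimetric case, is a Polish space on which $m$ (resp. the quotient measure) is a Borel probability measure (the Borel $\sigma$-algebra being dense mod $0$ in the measurable $\sigma$-algebra). Invariance means $\rho(x+h,y+h)=\rho(x,y)$ for all $h$. *)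

theory Defs
  imports "HOL-Analysis.Analysis" "HOL-Probability.Probability"
begin

definition normalized_haar :: "('a::topological_ab_group_add) measure \<Rightarrow> bool" where
  "normalized_haar M \<longleftrightarrow>
     sets M = sets borel \<and> prob_space M \<and>
     (\<forall>h. \<forall>A \<in> sets borel. emeasure M ((\<lambda>x. x + h) ` A) = emeasure M A)"

definition rho_open :: "('a \<Rightarrow> 'a \<Rightarrow> real) \<Rightarrow> 'a set \<Rightarrow> 'a set \<Rightarrow> bool" where
  "rho_open \<rho> X U \<longleftrightarrow> U \<subseteq> X \<and>
     (\<forall>x\<in>U. \<exists>e>0. \<forall>y\<in>X. \<rho> x y < e \<longrightarrow> y \<in> U)"

text \<open>Admissible semimetric on the measure space (space M, completion M).
  (1) rho is measurable, nonnegative, a semimetric on a set X of full measure,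
      with finite double integral;
  (2) the completion of the quotient metric space is Polish, i.e. (X, rho) is separable;
      the quotient measure is a Borel measure, i.e. every rho-Borel set is measurable;
      and rho-Borel sets are dense mod 0 in the measurable sigma-algebra.\<close>
definition admissible_semimetric :: "'a measure \<Rightarrow> ('a \<Rightarrow> 'a \<Rightarrow> real) \<Rightarrow> bool" where
  "admissible_semimetric M \<rho> \<longleftrightarrow>
     (\<lambda>(x,y). \<rho> x y) \<in> borel_measurable (completion (M \<Otimes>\<^sub>M M)) \<and>
     (\<forall>x y. 0 \<le> \<rho> x y) \<and>
     (\<integral>\<^sup>+ p. ennreal (\<rho> (fst p) (snd p)) \<partial>(completion (M \<Otimes>\<^sub>M M))) < \<infinity> \<and>
     (\<exists>X \<in> sets (completion M). space M - X \<in> null_sets (completion M) \<and>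
        (\<forall>x\<in>X. \<rho> x x = 0) \<and>
        (\<forall>x\<in>X. \<forall>y\<in>X. \<rho> x y = \<rho> y x) \<and>
        (\<forall>x\<in>X. \<forall>y\<in>X. \<forall>z\<in>X. \<rho> x z \<le> \<rho> x y + \<rho> y z) \<and>
        (\<exists>D. countable D \<and> D \<subseteq> X \<and> (\<forall>x\<in>X. \<forall>e>0. \<exists>d\<in>D. \<rho> x d < e)) \<and>
        sigma_sets X (Collect (rho_open \<rho> X)) \<subseteq> sets (completion M) \<and>
        (\<forall>A \<in> sets (completion M). \<exists>B \<in> sigma_sets X (Collect (rho_open \<rho> X)).
            (A - B) \<union> (B - A) \<in> null_sets (completion M)))"

end

theory Submission
  imports Defs
begin

lemma singleton_null:
  fixes m :: "('a::topological_ab_group_add) measure"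
  assumes inf: "infinite (UNIV :: 'a set)"
    and met: "metrizable_space (euclidean :: 'a topology)"
    and haar: "normalized_haar m"
  shows "{x} \<in> null_sets m"
proof -
  have sm: "sets m = sets borel" and ps: "prob_space m"
    and inv: "\<And>h A. A \<in> sets borel \<Longrightarrow> emeasure m ((\<lambda>x. x + h) ` A) = emeasure m A"
    using haar unfolding normalized_haar_def by auto
  have t1: "t1_space (euclidean :: 'a topology)" using met by (rule metrizable_imp_t1_space)
  have cl: "closed {y::'a}" for y
    using t1 unfolding t1_space_closedin_singleton by simp
  have sb: "{y::'a} \<in> sets m" for y using cl sm by (simp add: borel_closed)
  have eq: "emeasure m {y} = emeasure m {0}" for y
  proof -
    have "(\<lambda>x. x + y) ` {0} = {y}" by simp
    then show ?thesis using inv[of "{0}" y] cl[of 0] by (simp add: borel_closed)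
  qed
  define c where "c = emeasure m {0}"
  have "c = 0"
  proof (rule ccontr)
    assume "c \<noteq> 0"
    then have cpos: "c > 0" by (simp add: zero_less_iff_neq_zero)
    have cfin: "c \<le> 1" unfolding c_def using prob_space.emeasure_le_1[OF ps] by simp
    have "\<exists>n::nat. of_nat n * c > 1"
    proof -
      have "c \<noteq> \<infinity>" using cfin by (auto simp: top_unique)
      then obtain r where r: "c = ennreal r" "r > 0" using cpos
        by (cases c) auto
      obtain n :: nat where "n > 1 / r" using reals_Archimedean2 by blast
      then have "real n * r > 1" using r by (simp add: field_simps)
      then have "ennreal (real n * r) > 1" by simp
      then show ?thesis using r by (auto simp: ennreal_mult ennreal_of_nat_eq_real_of_nat)
    qed
    then obtain n :: nat where n: "of_nat n * c > 1" by blast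
    obtain F :: "'a set" where F: "finite F" "card F = n" using infinite_arbitrarily_large[OF inf] by blast
    have "emeasure m F = (\<Sum>y\<in>F. emeasure m {y})"
      using F(1) sb by (intro emeasure_eq_sum_singleton) auto
    also have "\<dots> = (\<Sum>y\<in>F. c)" unfolding c_def by (rule sum.cong[OF refl eq])
    also have "\<dots> = of_nat n * c" using F by simp
    finally have "emeasure m F > 1" using n by simp
    moreover have "emeasure m F \<le> 1" using prob_space.emeasure_le_1[OF ps] by simp
    ultimately show False by simp
  qed
  then show ?thesis using sb eq c_def by (simp add: null_sets_def)
qed

lemma small_elem:
  fixes m :: "('a::topological_ab_group_add) measure"
    and \<rho> :: "'a \<Rightarrow> 'a \<Rightarrow> real"
  assumes inf: "infinite (UNIV :: 'a set)"
    and cpt: "compact (UNIV :: 'a set)"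
    and met: "metrizable_space (euclidean :: 'a topology)"
    and haar: "normalized_haar m"
    and adm: "admissible_semimetric m \<rho>"
    and rinv: "\<forall>x y h. \<rho> (x + h) (y + h) = \<rho> x y"
    and U: "open U" "0 \<in> U" and e: "e > 0"
  shows "\<exists>g\<in>U. g \<noteq> 0 \<and> \<rho> 0 g < e"
proof -
  have sm: "sets m = sets borel" and ps: "prob_space m"
    using haar unfolding normalized_haar_def by auto
  have spm: "space m = UNIV" using sets_eq_imp_space_eq[OF sm] by simp
  obtain X where X: "X \<in> sets (completion m)" "space m - X \<in> null_sets (completion m)"
    and sym: "\<forall>x\<in>X. \<forall>y\<in>X. \<rho> x y = \<rho> y x"
    and tri: "\<forall>x\<in>X. \<forall>y\<in>X. \<forall>z\<in>X. \<rho> x z \<le> \<rho> x y + \<rho> y z"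
    and sig: "sigma_sets X (Collect (rho_open \<rho> X)) \<subseteq> sets (completion m)"
    and "\<exists>D. countable D \<and> D \<subseteq> X \<and> (\<forall>x\<in>X. \<forall>e>0. \<exists>d\<in>D. \<rho> x d < e)"
    using adm unfolding admissible_semimetric_def by blast
  then obtain D where D: "countable D" "D \<subseteq> X" "\<forall>x\<in>X. \<forall>e>0. \<exists>d\<in>D. \<rho> x d < e" by blast
  have "open {p::'a\<times>'a. snd p - fst p \<in> U}"
    by (intro open_vimage[of U "\<lambda>p. snd p - fst p", unfolded vimage_def] U continuous_intros)
  moreover have "(0,0) \<in> {p::'a\<times>'a. snd p - fst p \<in> U}" using U by simp
  ultimately obtain A B where AB: "open A" "open B" "(0,0) \<in> A \<times> B"
    "A \<times> B \<subseteq> {p::'a\<times>'a. snd p - fst p \<in> U}" by (rule open_prod_elim)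
  define V where "V = A \<inter> B"
  have V: "open V" "0 \<in> V" "\<And>a b. a \<in> V \<Longrightarrow> b \<in> V \<Longrightarrow> b - a \<in> U"
    using AB unfolding V_def by auto
  define T where "T c = {x. x - c \<in> V}" for c :: 'a
  have Topen: "open (T c)" for c
    unfolding T_def
    by (intro open_vimage[of V "\<lambda>x. x - c", unfolded vimage_def] V continuous_intros)
  have cov: "UNIV \<subseteq> (\<Union>c\<in>UNIV. T c)" using V(2) unfolding T_def by auto
  obtain C where C0: "C \<subseteq> UNIV" and C: "finite C" "UNIV \<subseteq> (\<Union>c\<in>C. T c)"
    by (rule compactE_image[OF cpt Topen cov])
  define Bl where "Bl d = {x\<in>X. \<rho> d x < e / 2}" for d
  have Bl_open: "rho_open \<rho> X (Bl d)" if "d \<in> X" for d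
    unfolding rho_open_def
  proof (intro conjI ballI)
    show "Bl d \<subseteq> X" unfolding Bl_def by auto
    fix x assume x: "x \<in> Bl d"
    show "\<exists>e'>0. \<forall>y\<in>X. \<rho> x y < e' \<longrightarrow> y \<in> Bl d"
    proof (intro exI[of _ "e/2 - \<rho> d x"] conjI ballI impI)
      show "e/2 - \<rho> d x > 0" using x unfolding Bl_def by auto
      fix y assume y: "y \<in> X" "\<rho> x y < e/2 - \<rho> d x"
      have "\<rho> d y \<le> \<rho> d x + \<rho> x y" using tri that y x unfolding Bl_def by blast
      then show "y \<in> Bl d" using y unfolding Bl_def by auto
    qed
  qed
  have Bl_sets: "Bl d \<in> sets (completion m)" if "d \<in> X" for d
    using sig Bl_open[OF that] by (auto intro: sigma_sets.Basic)
  have T_sets: "T c \<in> sets (completion m)" for c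
    using Topen[of c] sm by (auto intro: borel_open)
  define P where "P q = Bl (fst q) \<inter> T (snd q)" for q
  have "\<exists>q\<in>D\<times>C. P q \<notin> null_sets (completion m)"
  proof (rule ccontr)
    assume "\<not> ?thesis"
    then have N: "\<And>q. q \<in> D\<times>C \<Longrightarrow> P q \<in> null_sets (completion m)" by blast
    have "(\<Union>q\<in>D\<times>C. P q) \<in> null_sets (completion m)"
      using D(1) C(1) N by (intro null_sets_UN') (auto intro: countable_SIGMA countable_finite)
    then have "(\<Union>q\<in>D\<times>C. P q) \<union> (space m - X) \<in> null_sets (completion m)"
      using X(2) by auto
    moreover have "(\<Union>q\<in>D\<times>C. P q) \<union> (space m - X) = space (completion m)"
    proof -
      have "x \<in> (\<Union>q\<in>D\<times>C. P q)" if xX0: "x \<in> X" for x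
      proof -
        have e2: "e/2 > 0" using e by simp
        obtain d where d: "d \<in> D" "\<rho> x d < e/2" using D(3) xX0 e2 by blast
        obtain c where c: "c \<in> C" "x \<in> T c" using C(2) by blast
        have "\<rho> d x < e/2" using sym d D(2) xX0 by auto
        then have "x \<in> P (d,c)" using c xX0 unfolding P_def Bl_def by simp
        then show ?thesis using d c by blast
      qed
      then show ?thesis using spm by auto
    qed
    ultimately have "space (completion m) \<in> null_sets (completion m)" by simp
    then have "emeasure (completion m) (space (completion m)) = 0" by auto
    moreover have "emeasure (completion m) (space (completion m)) = 1"
      using prob_space.emeasure_space_1[OF ps] by simp
    ultimately show False by simp
  qed
  then obtain d c where dc: "d \<in> D" "c \<in> C" "P (d,c) \<notin> null_sets (completion m)" by auto
  have "\<exists>x y. x \<in> P (d,c) \<and> y \<in> P (d,c) \<and> x \<noteq> y"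
  proof (rule ccontr)
    assume "\<not> ?thesis"
    then have sub: "P (d,c) \<subseteq> {SOME x. x \<in> P (d,c)}" by (metis singletonI some_eq_ex subsetI)
    have "{SOME x. x \<in> P (d,c)} \<in> null_sets (completion m)"
      using singleton_null[OF inf met haar] by (rule null_sets_completionI)
    then show False using null_sets_completion_subset[OF sub] dc(3) by blast
  qed
  then obtain x y where xy: "x \<in> P (d,c)" "y \<in> P (d,c)" "x \<noteq> y" by blast
  have dX: "d \<in> X" using dc D(2) by auto
  have xX: "x \<in> X" "\<rho> d x < e/2" "x - c \<in> V" and yX: "y \<in> X" "\<rho> d y < e/2" "y - c \<in> V"
    using xy unfolding P_def Bl_def T_def by auto
  have "\<rho> x y \<le> \<rho> x d + \<rho> d y" using tri xX yX dX by blast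
  also have "\<dots> < e" using sym xX yX dX by auto
  finally have r: "\<rho> x y < e" .
  have "\<rho> 0 (y - x) = \<rho> (x + - x) (y + - x)" by simp
  also have "\<dots> = \<rho> x y" using rinv by blast
  finally have "\<rho> 0 (y - x) < e" using r by simp
  moreover have "y - x \<in> U" using V(3)[OF xX(3) yX(3)] by (simp add: algebra_simps)
  moreover have "y - x \<noteq> 0" using xy(3) by simp
  ultimately show ?thesis by blast
qed


theorem corollary1:
  fixes m :: "('a::topological_ab_group_add) measure"
    and \<rho> :: "'a \<Rightarrow> 'a \<Rightarrow> real"
  assumes "infinite (UNIV :: 'a set)"
    and "compact (UNIV :: 'a set)"
    and "metrizable_space (euclidean :: 'a topology)"
    and "normalized_haar m"
    and "admissible_semimetric m \<rho>"
    and "\<forall>x y h. \<rho> (x + h) (y + h) = \<rho> x y"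
  shows "\<exists>g :: nat \<Rightarrow> 'a. (\<forall>n. g n \<noteq> 0) \<and> g \<longlonglongrightarrow> 0 \<and> (\<lambda>n. \<rho> 0 (g n)) \<longlonglongrightarrow> 0"
proof -
  obtain M and d :: "'a \<Rightarrow> 'a \<Rightarrow> real" where Ms: "Metric_space M d"
    and eq: "euclidean = Metric_space.mtopology M d"
    using assms(3) unfolding metrizable_space_def by blast
  interpret Metric_space M d by (rule Ms)
  have MU: "M = UNIV" using topspace_mtopology eq by (metis topspace_euclidean)
  have nn: "\<forall>x y. 0 \<le> \<rho> x y" using assms(5) unfolding admissible_semimetric_def by blast
  have "\<forall>n. \<exists>g\<in>mball 0 (inverse (real (Suc n))). g \<noteq> 0 \<and> \<rho> 0 g < inverse (real (Suc n))"
  proof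
    fix n
    have "open (mball 0 (inverse (real (Suc n))))"
      unfolding open_openin eq by simp
    moreover have "0 \<in> mball 0 (inverse (real (Suc n)))" unfolding in_mball using MU by simp
    ultimately show "\<exists>g\<in>mball 0 (inverse (real (Suc n))). g \<noteq> 0 \<and> \<rho> 0 g < inverse (real (Suc n))"
      by (intro small_elem[OF assms]) auto
  qed
  then obtain g where g: "\<And>n. g n \<in> mball 0 (inverse (real (Suc n)))" "\<And>n. g n \<noteq> 0"
    "\<And>n. \<rho> 0 (g n) < inverse (real (Suc n))" by metis
  have lim1: "(\<lambda>n. d (g n) 0) \<longlonglongrightarrow> 0"
  proof (rule tendsto_sandwich[OF _ _ tendsto_const LIMSEQ_inverse_real_of_nat])
    show "\<forall>\<^sub>F n in sequentially. 0 \<le> d (g n) 0" using MU by simp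
    show "\<forall>\<^sub>F n in sequentially. d (g n) 0 \<le> inverse (real (Suc n))"
    proof (rule always_eventually, rule allI)
      fix n
      have "d 0 (g n) < inverse (real (Suc n))" using g(1)[of n] unfolding in_mball by blast
      then show "d (g n) 0 \<le> inverse (real (Suc n))" using commute[of "g n" 0] by simp
    qed
  qed
  have "limitin mtopology g 0 sequentially"
    unfolding limitin_metric_dist_null using MU lim1 by simp
  then have "g \<longlonglongrightarrow> 0" unfolding eq[symmetric] by simp
  moreover have "(\<lambda>n. \<rho> 0 (g n)) \<longlonglongrightarrow> 0"
  proof (rule tendsto_sandwich[OF _ _ tendsto_const LIMSEQ_inverse_real_of_nat])
    show "\<forall>\<^sub>F n in sequentially. 0 \<le> \<rho> 0 (g n)" using nn by simp
    show "\<forall>\<^sub>F n in sequentially. \<rho> 0 (g n) \<le> inverse (real (Suc n))"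
      using g(3) by (simp add: less_imp_le)
  qed
  ultimately show ?thesis using g(2) by blast
qed

end
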